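(* Let $d>0$, let $\mathcal{S}$ be the 4-PAM constellation labeled by the Gray labeling $\boldsymbol{q}=[1,0,2,3]$ or $\boldsymbol{q}=[2,0,1,3]$, and let $\mathcal{B}\subset\{0,1\}^{2N}$ be any binary linear code with at least two codewords. Then $\mathsf{L}(\mathcal{B})=0$.
   Context: $\mathcal{S}=\{s_1,s_2,s_3,s_4\}$ with $s_1=-3d$, $s_2=-d$, $s_3=d$, $s_4=3d$. A labeling is a bijection $\Phi_{\mathcal{S}}:\{0,1\}^2\to\mathcal{S}$, described by $\boldsymbol{q}=[q_1,\dots,q_4]$ where $q_i$ is the integer whose two-bit representation (most significant bit first) is $\Phi_{\mathcal{S}}^{-1}(s_i)$. A codeword of $\mathcal{B}$ is written $\boldsymbol{b}=[\boldsymbol{b}[1],\dots,\boldsymbol{b}[N]]$ with $\boldsymbol{b}[k]=[b_1[k],b_2[k]]$, and the CM code is $\mathcal{X}=\{[\Phi_{\mathcal{S}}(\boldsymbol{b}[1]),\dots,\Phi_{\mathcal{S}}(\boldsymbol{b}[N])]:\boldsymbol{b}\in\mathcal{B}\}$. For $\boldsymbol{x},\hat{\boldsymbol{x}}\in\mathcal{S}^N$ and each $k$ with $x[k]\neq\hat{x}[k]$: $\mu^{\mathcal{X}}_k=\sigma^{2,\mathcal{X}}_k=(x[k]-\hat{x}[k])^2/(4d^2)$; $\mu^{\mathcal{B}}_k=\sigma^{2,\mathcal{B}}_k=(x[k]-\hat{x}[k])^2/(4d^2)$ except that if $\{x[k],\hat{x}[k]\}=\{s_1,s_4\}$ then $\mu^{\mathcal{B}}_k=3$,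 $\sigma^{2,\mathcal{B}}_k=1$. Summing over $k$ with $x[k]\neq\hat{x}[k]$, $a^{\mathcal{X}}(\boldsymbol{x},\hat{\boldsymbol{x}})=\sum_k\mu^{\mathcal{X}}_k/\sqrt{\sum_k\sigma^{2,\mathcal{X}}_k}$ and $a^{\mathcal{B}}(\boldsymbol{x},\hat{\boldsymbol{x}})=\sum_k\mu^{\mathcal{B}}_k/\sqrt{\sum_k\sigma^{2,\mathcal{B}}_k}$ (normalized distances of the symbol-wise ML decoder and of the bit-wise max-log decoder under the zero-crossing approximation). The asymptotic loss of the code is $\mathsf{L}(\mathcal{B})=20\log_{10}\Big(\min_{\boldsymbol{x}\neq\hat{\boldsymbol{x}}\in\mathcal{X}}a^{\mathcal{X}}(\boldsymbol{x},\hat{\boldsymbol{x}})\big/\min_{\boldsymbol{x}\neq\hat{\boldsymbol{x}}\in\mathcal{X}}a^{\mathcal{B}}(\boldsymbol{x},\hat{\boldsymbol{x}})\Big)$ dB. *)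

theory Defs
  imports Complex_Main
begin

text \<open>4-PAM constellation: pam_sym d i is s_{i+1} for i = 0..3, i.e. -3d, -d, d, 3d.\<close>
definition pam_sym :: "real \<Rightarrow> nat \<Rightarrow> real" where
  "pam_sym d i = (2 * real i - 3) * d"

definition bitval :: "bool \<times> bool \<Rightarrow> nat" where
  "bitval b = 2 * (if fst b then 1 else 0) + (if snd b then 1 else 0)"

text \<open>Labeling Phi_S given by q = [q_1,...,q_4] (0-based list): Phi(b) = s_i iff q_i = bitval b.\<close>
definition Phi :: "nat list \<Rightarrow> real \<Rightarrow> bool \<times> bool \<Rightarrow> real" where
  "Phi q d b = (\<Sum>i<4. if q ! i = bitval b then pam_sym d i else 0)"

text \<open>Codewords of a binary code of length 2N as lists of N bit pairs b[k] = (b_1[k], b_2[k]).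
  A binary linear code: a subspace of GF(2)^{2N} (contains 0, closed under addition).\<close>
definition binary_linear_code :: "nat \<Rightarrow> (bool \<times> bool) list set \<Rightarrow> bool" where
  "binary_linear_code N B \<longleftrightarrow>
     B \<subseteq> {b. length b = N} \<and> replicate N (False, False) \<in> B \<and>
     (\<forall>b\<in>B. \<forall>c\<in>B. map2 (\<lambda>u v. (fst u \<noteq> fst v, snd u \<noteq> snd v)) b c \<in> B)"

definition CM_code :: "nat list \<Rightarrow> real \<Rightarrow> (bool \<times> bool) list set \<Rightarrow> real list set" where
  "CM_code q d B = (\<lambda>b. map (Phi q d) b) ` B"

definition mu_X :: "real \<Rightarrow> real \<Rightarrow> real \<Rightarrow> real" where
  "mu_X d u v = (u - v)^2 / (4 * d^2)"

definition sigma2_X :: "real \<Rightarrow> real \<Rightarrow> real \<Rightarrow> real" where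
  "sigma2_X d u v = (u - v)^2 / (4 * d^2)"

definition mu_B :: "real \<Rightarrow> real \<Rightarrow> real \<Rightarrow> real" where
  "mu_B d u v = (if {u, v} = {pam_sym d 0, pam_sym d 3} then 3 else (u - v)^2 / (4 * d^2))"

definition sigma2_B :: "real \<Rightarrow> real \<Rightarrow> real \<Rightarrow> real" where
  "sigma2_B d u v = (if {u, v} = {pam_sym d 0, pam_sym d 3} then 1 else (u - v)^2 / (4 * d^2))"

definition diff_pos :: "real list \<Rightarrow> real list \<Rightarrow> nat set" where
  "diff_pos x xh = {k. k < length x \<and> x ! k \<noteq> xh ! k}"

definition a_X :: "real \<Rightarrow> real list \<Rightarrow> real list \<Rightarrow> real" where
  "a_X d x xh = (\<Sum>k\<in>diff_pos x xh. mu_X d (x!k) (xh!k)) /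
                 sqrt (\<Sum>k\<in>diff_pos x xh. sigma2_X d (x!k) (xh!k))"

definition a_B :: "real \<Rightarrow> real list \<Rightarrow> real list \<Rightarrow> real" where
  "a_B d x xh = (\<Sum>k\<in>diff_pos x xh. mu_B d (x!k) (xh!k)) /
                 sqrt (\<Sum>k\<in>diff_pos x xh. sigma2_B d (x!k) (xh!k))"

definition asym_loss :: "nat list \<Rightarrow> real \<Rightarrow> (bool \<times> bool) list set \<Rightarrow> real" where
  "asym_loss q d B =
     (let X = CM_code q d B in
      20 * log 10 (Min {a_X d x xh | x xh. x \<in> X \<and> xh \<in> X \<and> x \<noteq> xh} /
                   Min {a_B d x xh | x xh. x \<in> X \<and> xh \<in> X \<and> x \<noteq> xh}))"

end

theory Submission imports Defs begin
definition xorp :: "bool\<times>bool \<Rightarrow> bool\<times>bool \<Rightarrow> bool\<times>bool" where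
  "xorp u v = (fst u \<noteq> fst v, snd u \<noteq> snd v)"
definition ind :: "real \<Rightarrow> real \<Rightarrow> real \<Rightarrow> real" where
  "ind d u v = (if {u, v} = {pam_sym d 0, pam_sym d 3} then 1 else 0)"

lemma Phi1:
  "Phi [1,0,2,3] d (False,False) = -d" "Phi [1,0,2,3] d (True,True) = 3*d"
  "Phi [1,0,2,3] d (False,True) = -3*d" "Phi [1,0,2,3] d (True,False) = d"
  by (simp_all add: Phi_def bitval_def pam_sym_def lessThan_Suc numeral_eq_Suc)
lemma Phi2:
  "Phi [2,0,1,3] d (False,False) = -d" "Phi [2,0,1,3] d (True,True) = 3*d"
  "Phi [2,0,1,3] d (False,True) = d" "Phi [2,0,1,3] d (True,False) = -3*d"
  by (simp_all add: Phi_def bitval_def pam_sym_def lessThan_Suc numeral_eq_Suc)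

definition P where "P d u v z w \<longleftrightarrow> (u \<noteq> v \<longleftrightarrow> z \<noteq> w) \<and> sigma2_B d u v = sigma2_X d z w \<and> mu_X d z w = sigma2_X d z w
     \<and> ind d u v \<le> sigma2_B d u v \<and> 0 \<le> ind d u v \<and> mu_B d u v = sigma2_B d u v + 2 * ind d u v
     \<and> mu_X d u v = sigma2_B d u v + 8 * ind d u v"

lemma Pgen:
  assumes d: "d > 0"
   and h1: "{u,v} = {-3*d,3*d} \<Longrightarrow> (z - w)^2 = 4*d^2"
   and h2: "{u,v} \<noteq> {-3*d,3*d} \<Longrightarrow> (u - v)^2 = (z - w)^2"
   and h3: "u \<noteq> v \<longleftrightarrow> z \<noteq> w"
  shows "P d u v z w"
proof -
  have ps: "pam_sym d 0 = -3*d" "pam_sym d 3 = 3*d" by (simp_all add: pam_sym_def)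
  have d2: "d^2 > 0" using d by simp
  show ?thesis
  proof (cases "{u,v} = {-3*d,3*d}")
    case True
    then have uv: "(u = -3*d \<and> v = 3*d) \<or> (u = 3*d \<and> v = -3*d)" using d
      by (auto simp: doubleton_eq_iff)
    then have "(u-v)^2 = 36*d^2" by (auto simp: power2_eq_square)
    then show ?thesis using True h1 h3 d2
      unfolding P_def ind_def mu_B_def sigma2_B_def mu_X_def sigma2_X_def ps
      by (simp add: field_simps)
  next
    case False
    then show ?thesis using h2 h3 d2
      unfolding P_def ind_def mu_B_def sigma2_B_def mu_X_def sigma2_X_def ps
      by simp
  qed
qed

lemma pos1:
  fixes b1 b2 c1 c2 :: bool
  assumes d: "d > 0"
  shows "P d (Phi [1,0,2,3] d (b1,b2)) (Phi [1,0,2,3] d (c1,c2)) (Phi [1,0,2,3] d (False,False)) (Phi [1,0,2,3] d (xorp (b1,b2) (c1,c2)))"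
  apply (cases b1; cases b2; cases c1; cases c2)
  apply (simp_all only: Phi1 xorp_def fst_conv snd_conv simp_thms)
  apply (rule Pgen[OF d]; use d in \<open>auto simp: doubleton_eq_iff power2_eq_square algebra_simps\<close>)+
  done

lemma pos2:
  fixes b1 b2 c1 c2 :: bool
  assumes d: "d > 0"
  shows "P d (Phi [2,0,1,3] d (b1,b2)) (Phi [2,0,1,3] d (c1,c2)) (Phi [2,0,1,3] d (False,False)) (Phi [2,0,1,3] d (xorp (b1,b2) (c1,c2)))"
  apply (cases b1; cases b2; cases c1; cases c2)
  apply (simp_all only: Phi2 xorp_def fst_conv snd_conv simp_thms)
  apply (rule Pgen[OF d]; use d in \<open>auto simp: doubleton_eq_iff power2_eq_square algebra_simps\<close>)+
  done

lemma pos: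
  fixes b c :: "bool\<times>bool"
  assumes d: "d > 0" and q: "q = [1, 0, 2, 3] \<or> q = [2, 0, 1, 3]"
  shows "P d (Phi q d b) (Phi q d c) (Phi q d (False,False)) (Phi q d (xorp b c))"
  using q pos1[OF d, of "fst b" "snd b" "fst c" "snd c"] pos2[OF d, of "fst b" "snd b" "fst c" "snd c"]
  by auto
lemma real_key:
  fixes S I :: real
  assumes "0 \<le> I" "I \<le> S"
  shows "S / sqrt S \<le> (S + 2*I) / sqrt S \<and> (S + 2*I) / sqrt S \<le> (S + 8*I) / sqrt (S + 8*I)"
proof
  show "S / sqrt S \<le> (S + 2*I) / sqrt S" using assms by (simp add: divide_right_mono)
  have e: "(S + 8*I) / sqrt (S + 8*I) = sqrt (S + 8*I)"
    using assms by (metis real_div_sqrt add_nonneg_nonneg mult_nonneg_nonneg order_trans zero_le_numeral)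
  show "(S + 2*I) / sqrt S \<le> (S + 8*I) / sqrt (S + 8*I)"
  proof (cases "S = 0")
    case True then show ?thesis using assms by simp
  next
    case False
    then have Sp: "S > 0" using assms by simp
    have "(S + 2*I) \<le> sqrt (S * (S + 8*I))"
      apply (rule real_le_rsqrt) using assms by (simp add: power2_eq_square algebra_simps mult_mono)
    then have "(S + 2*I) \<le> sqrt S * sqrt (S + 8*I)" by (simp add: real_sqrt_mult)
    then show ?thesis unfolding e using Sp by (simp add: divide_le_eq mult.commute)
  qed
qed

lemma list_key:
  assumes d: "d > 0" and q: "q = [1, 0, 2, 3] \<or> q = [2, 0, 1, 3]"
    and lb: "length b = N" and lc: "length c = N"
  defines "x \<equiv> map (Phi q d) b" and "xh \<equiv> map (Phi q d) c"
    and "x0 \<equiv> map (Phi q d) (replicate N (False,False))"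
    and "xe \<equiv> map (Phi q d) (map2 xorp b c)"
  shows "diff_pos x xh = diff_pos x0 xe \<and> a_X d x0 xe \<le> a_B d x xh \<and> a_B d x xh \<le> a_X d x xh"
proof -
  have Pk: "\<And>k. k < N \<Longrightarrow> P d (x!k) (xh!k) (x0!k) (xe!k)"
    using pos[OF d q] lb lc unfolding x_def xh_def x0_def xe_def by simp
  have lens: "length x = N" "length x0 = N"
    using lb lc unfolding x_def x0_def by simp_all
  define D where "D = diff_pos x xh"
  have DD: "diff_pos x0 xe = D"
    unfolding D_def diff_pos_def using Pk lens unfolding P_def by auto
  have Dsub: "D \<subseteq> {..<N}" unfolding D_def diff_pos_def using lens by auto
  have fD: "finite D" using Dsub finite_subset by blast
  define S where "S = (\<Sum>k\<in>D. sigma2_B d (x!k) (xh!k))"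
  define I where "I = (\<Sum>k\<in>D. ind d (x!k) (xh!k))"
  have PD: "\<And>k. k \<in> D \<Longrightarrow> P d (x!k) (xh!k) (x0!k) (xe!k)" using Pk Dsub by auto
  have 1: "(\<Sum>k\<in>D. sigma2_X d (x0!k) (xe!k)) = S" "(\<Sum>k\<in>D. mu_X d (x0!k) (xe!k)) = S"
    unfolding S_def using PD unfolding P_def by (auto intro: sum.cong)
  have 2: "(\<Sum>k\<in>D. mu_B d (x!k) (xh!k)) = S + 2 * I"
    unfolding S_def I_def using PD unfolding P_def
    by (simp add: sum.distrib sum_distrib_left)
  have 3: "(\<Sum>k\<in>D. mu_X d (x!k) (xh!k)) = S + 8 * I"
    unfolding S_def I_def using PD unfolding P_def
    by (simp add: sum.distrib sum_distrib_left)
  have 4: "(\<Sum>k\<in>D. sigma2_X d (x!k) (xh!k)) = S + 8 * I"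
    using 3 by (simp add: mu_X_def sigma2_X_def)
  have I0: "0 \<le> I" unfolding I_def using PD unfolding P_def by (simp add: sum_nonneg)
  have IS: "I \<le> S" unfolding I_def S_def using PD unfolding P_def by (intro sum_mono) blast
  have "a_X d x0 xe = S / sqrt S" unfolding a_X_def DD 1 ..
  moreover have "a_B d x xh = (S + 2*I) / sqrt S" unfolding a_B_def D_def[symmetric] 2 S_def
    using PD unfolding P_def by simp
  moreover have "a_X d x xh = (S + 8*I) / sqrt (S + 8*I)" unfolding a_X_def D_def[symmetric] 3 4 ..
  ultimately show ?thesis using real_key[OF I0 IS] DD D_def by simp
qed

theorem theorem2:
  fixes d :: real and N :: nat and q :: "nat list" and B :: "(bool \<times> bool) list set"
  assumes "d > 0"
    and "q = [1, 0, 2, 3] \<or> q = [2, 0, 1, 3]"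
    and "binary_linear_code N B"
    and "card B \<ge> 2"
  shows "asym_loss q d B = 0"
proof -
  define X where "X = CM_code q d B"
  define AX where "AX = {a_X d x xh | x xh. x \<in> X \<and> xh \<in> X \<and> x \<noteq> xh}"
  define AB where "AB = {a_B d x xh | x xh. x \<in> X \<and> xh \<in> X \<and> x \<noteq> xh}"
  have fB: "finite B" using assms(4) card.infinite by fastforce
  have fX: "finite X" unfolding X_def CM_code_def using fB by simp
  have fAX: "finite AX"
    by (rule finite_subset[of _ "(\<lambda>(x,y). a_X d x y) ` (X \<times> X)"]) (use fX in \<open>auto simp: AX_def\<close>)
  have fAB: "finite AB"
    by (rule finite_subset[of _ "(\<lambda>(x,y). a_B d x y) ` (X \<times> X)"]) (use fX in \<open>auto simp: AB_def\<close>)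
  have lin: "B \<subseteq> {b. length b = N}" "replicate N (False, False) \<in> B"
    "\<And>b c. b \<in> B \<Longrightarrow> c \<in> B \<Longrightarrow> map2 xorp b c \<in> B"
    using assms(3) unfolding binary_linear_code_def xorp_def by auto
  have key: "\<exists>x0 xe. x0 \<in> X \<and> xe \<in> X \<and> x0 \<noteq> xe \<and> a_X d x0 xe \<le> a_B d x xh \<and> a_B d x xh \<le> a_X d x xh"
    if hx: "x \<in> X" "xh \<in> X" "x \<noteq> xh" for x xh
  proof -
    obtain b c where bc: "b \<in> B" "c \<in> B" "x = map (Phi q d) b" "xh = map (Phi q d) c"
      using hx unfolding X_def CM_code_def by (meson imageE)
    have lb: "length b = N" "length c = N" using bc lin by auto
    note L = list_key[OF assms(1,2) lb]
    let ?x0 = "map (Phi q d) (replicate N (False,False))"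
    let ?xe = "map (Phi q d) (map2 xorp b c)"
    have "diff_pos x xh \<noteq> {}"
    proof
      assume "diff_pos x xh = {}"
      then have "\<forall>k<length x. x!k = xh!k" unfolding diff_pos_def by auto
      moreover have "length x = length xh" using bc lb by simp
      ultimately show False using that(3) nth_equalityI by blast
    qed
    then have "diff_pos ?x0 ?xe \<noteq> {}" using L bc by simp
    then have "?x0 \<noteq> ?xe"
    proof (rule contrapos_nn)
      assume "?x0 = ?xe"
      then show "diff_pos ?x0 ?xe = {}" unfolding diff_pos_def by simp
    qed
    moreover have "?x0 \<in> X" unfolding X_def CM_code_def using lin(2) by (rule imageI)
    moreover have "?xe \<in> X" unfolding X_def CM_code_def using lin(3)[OF bc(1,2)] by (rule imageI)
    ultimately show ?thesis using L bc by blast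
  qed
  have "Min AX = Min AB"
  proof (cases "AX = {}")
    case True
    then have "AB = {}" unfolding AX_def AB_def by blast
    then show ?thesis using True by simp
  next
    case False
    then have nB: "AB \<noteq> {}" unfolding AX_def AB_def by blast
    obtain x xh where m1: "Min AB = a_B d x xh" "x \<in> X" "xh \<in> X" "x \<noteq> xh"
      using Min_in[OF fAB nB] unfolding AB_def by auto
    obtain y yh where m2: "Min AX = a_X d y yh" "y \<in> X" "yh \<in> X" "y \<noteq> yh"
      using Min_in[OF fAX False] unfolding AX_def by auto
    obtain x0 xe where k1: "x0 \<in> X" "xe \<in> X" "x0 \<noteq> xe" "a_X d x0 xe \<le> a_B d x xh"
      using key[OF m1(2-4)] by blast
    have "Min AX \<le> a_X d x0 xe" using fAX k1 unfolding AX_def by (intro Min_le) blast+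
    moreover have "Min AB \<le> a_B d y yh" using fAB m2 unfolding AB_def by (intro Min_le) blast+
    moreover have "a_B d y yh \<le> a_X d y yh" using key[OF m2(2-4)] by blast
    ultimately show ?thesis using m1 m2 k1 by linarith
  qed
  then show ?thesis unfolding asym_loss_def Let_def X_def[symmetric] AX_def[symmetric] AB_def[symmetric]
    by (cases "Min AB = 0") (simp_all add: log_def)
qed

end
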